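(* Let $A \in \mathbb{R}^{m \times r}$, $b \in \mathbb{R}^m$, let $P = \{ x \in \mathbb{R}^r \mid Ax \ge b\}$ be a polyhedron and $C^r = \{ x \in \mathbb{R}^r \mid Ax \ge 0\}$ its recession cone. Every vector $x \in P$ is a conformal sum of elementary vectors of $P$; that is, there exist finite sets $E_0 \subseteq C^r$ and $E_1 \subseteq P$ of elementary vectors of $P$ such that \[ x = \sum_{e \in E_0} e + \sum_{e \in E_1} \lambda_e e \quad \text{with } \operatorname{sign}(e) \le \operatorname{sign}(x) \text{ for all } e \in E_0 \cup E_1, \] $\lambda_e \ge 0$, and $\sum_{e \in E_1} \lambda_e = 1$ (hence $|E_1| \ge 1$). The set $E = E_0 \cup E_1$ can be chosen such that $|E| \le \dim(P) + 1$ and $|E| \le |\operatorname{supp}(x)| + |\operatorname{supp}(Ax)| + 1$.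
   Context: For $x \in \mathbb{R}^n$, $\operatorname{supp}(x) = \{ i \mid x_i \neq 0\}$, and $\operatorname{sign}(x) \in \{-,0,+\}^n$ is obtained by applying the sign function componentwise. The relations $0 < -$ and $0 < +$ induce a componentwise partial order on $\{-,0,+\}^n$ ($-$ and $+$ incomparable). $\dim(P)$ is the dimension of the affine hull of $P$. A nonzero $x \in C^r$ is conformally non-decomposable (cND) if for all nonzero $x^1,x^2 \in C^r$ with $\operatorname{sign}(x^1),\operatorname{sign}(x^2) \le \operatorname{sign}(x)$, $x = x^1 + x^2$ implies $x^1 = \lambda x^2$ for some $\lambda > 0$. A vector $x \in P$ is convex-conformally non-decomposable (ccND) if for all $x^1,x^2 \in P$ with $\operatorname{sign}(x^1),\operatorname{sign}(x^2) \le \operatorname{sign}(x)$ and all $0<\lambda<1$, $x = \lambda x^1 + (1-\lambda) x^2$ implies $x^1 = x^2$. A vector $e \in C^r \cup P$ is an elementary vector of $P$ if either $e \in C^r$ is cND or $e \in P$ is ccND. *)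

theory Defs
  imports "HOL-Analysis.Analysis"
begin

definition polyhedron :: "real^'r^'m \<Rightarrow> real^'m \<Rightarrow> (real^'r) set" where
  "polyhedron A b = {x. \<forall>i. (A *v x) $ i \<ge> b $ i}"

definition rec_cone :: "real^'r^'m \<Rightarrow> (real^'r) set" where
  "rec_cone A = {x. \<forall>i. (A *v x) $ i \<ge> 0}"

definition supp :: "real^'n \<Rightarrow> 'n set" where
  "supp x = {i. x $ i \<noteq> 0}"

text \<open>sign(y) \<le> sign(x) componentwise (0 < -, 0 < +).\<close>
definition sign_le :: "real^'n \<Rightarrow> real^'n \<Rightarrow> bool" where
  "sign_le y x \<longleftrightarrow> (\<forall>i. y $ i = 0 \<or> sgn (y $ i) = sgn (x $ i))"

definition cND :: "real^'r^'m \<Rightarrow> real^'r \<Rightarrow> bool" where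
  "cND A x \<longleftrightarrow> x \<in> rec_cone A \<and> x \<noteq> 0 \<and>
     (\<forall>x1 x2. x1 \<in> rec_cone A \<longrightarrow> x2 \<in> rec_cone A \<longrightarrow> x1 \<noteq> 0 \<longrightarrow> x2 \<noteq> 0 \<longrightarrow>
        sign_le x1 x \<longrightarrow> sign_le x2 x \<longrightarrow> x = x1 + x2 \<longrightarrow> (\<exists>c>0. x1 = c *\<^sub>R x2))"

definition ccND :: "real^'r^'m \<Rightarrow> real^'m \<Rightarrow> real^'r \<Rightarrow> bool" where
  "ccND A b x \<longleftrightarrow> x \<in> polyhedron A b \<and>
     (\<forall>x1 x2 t. x1 \<in> polyhedron A b \<longrightarrow> x2 \<in> polyhedron A b \<longrightarrow>
        sign_le x1 x \<longrightarrow> sign_le x2 x \<longrightarrow> 0 < t \<longrightarrow> t < 1 \<longrightarrow>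
        x = t *\<^sub>R x1 + (1 - t) *\<^sub>R x2 \<longrightarrow> x1 = x2)"

end

theory Submission
  imports Defs
begin

definition sg :: "real^'n \<Rightarrow> real^'n" where "sg x = (\<chi> j. sgn (x$j))"

lemma sc: "(y = 0 \<or> sgn y = sgn x) \<longleftrightarrow> sgn x * y = \<bar>y\<bar>" for x y :: real
  by (cases "x > 0"; cases "x < 0"; cases "y > 0"; cases "y < 0") (auto simp: sgn_real_def)
lemma sc3: "sgn x * y = \<bar>y\<bar> \<longleftrightarrow> 0 \<le> sgn x * y \<and> (1 - \<bar>sgn x\<bar>) * y = 0" for x y :: real
  by (cases "x > 0"; cases "x < 0"; cases "y > 0"; cases "y < 0") (auto simp: sgn_real_def)
lemma sc2: "sgn x * y = \<bar>y\<bar> \<longleftrightarrow> (x = 0 \<longrightarrow> y = 0) \<and> (x > 0 \<longrightarrow> y \<ge> 0) \<and> (x < 0 \<longrightarrow> y \<le> 0)" for x y :: real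
  by (cases "x > 0"; cases "x < 0"; cases "y > 0"; cases "y < 0") (auto simp: sgn_real_def)

lemma sign_le_iff: "sign_le y x \<longleftrightarrow> (\<forall>j. sgn (x$j) * y$j = \<bar>y$j\<bar>)"
  unfolding sign_le_def by (simp add: sc)

lemma sg_inner: "sign_le y x \<Longrightarrow> sg x \<bullet> y = (\<Sum>j\<in>UNIV. \<bar>y$j\<bar>)"
  unfolding sg_def inner_vec_def by (simp add: sign_le_iff)

lemma sg_inner_nonneg: "sign_le y x \<Longrightarrow> sg x \<bullet> y \<ge> 0"
  by (simp add: sg_inner sum_nonneg)

lemma sg_inner_pos: "sign_le y x \<Longrightarrow> y \<noteq> 0 \<Longrightarrow> sg x \<bullet> y > 0"
proof -
  assume a: "sign_le y x" "y \<noteq> 0"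
  then obtain j where "y$j \<noteq> 0" by (metis vec_eq_iff zero_index)
  then have "0 < \<bar>y$j\<bar>" by simp
  also have "\<dots> \<le> (\<Sum>j\<in>UNIV. \<bar>y$j\<bar>)" by (rule member_le_sum) auto
  finally show ?thesis using a sg_inner by metis
qed

lemma sign_le_trans: "sign_le z y \<Longrightarrow> sign_le y x \<Longrightarrow> sign_le z x"
  unfolding sign_le_def by (metis sgn_0_0)

lemma sign_le_scale1: "c > 0 \<Longrightarrow> sign_le (c *\<^sub>R y) x \<longleftrightarrow> sign_le y x"
  unfolding sign_le_def by (simp add: sgn_mult)

lemma sign_le_scale2: "c > 0 \<Longrightarrow> sign_le y (c *\<^sub>R x) \<longleftrightarrow> sign_le y x"
  unfolding sign_le_def by (simp add: sgn_mult)

lemma sign_le_refl: "sign_le x x" unfolding sign_le_def by simp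

lemma cND_scale: assumes "c > 0" "cND A e" shows "cND A (c *\<^sub>R e)"
proof -
  have C: "\<And>y. y \<in> rec_cone A \<Longrightarrow> c *\<^sub>R y \<in> rec_cone A" "\<And>y. y \<in> rec_cone A \<Longrightarrow> inverse c *\<^sub>R y \<in> rec_cone A"
    using assms(1) by (auto simp: rec_cone_def matrix_vector_mult_scaleR)
  show ?thesis unfolding cND_def
  proof (intro conjI allI impI)
    show "c *\<^sub>R e \<in> rec_cone A" using C assms unfolding cND_def by auto
    show "c *\<^sub>R e \<noteq> 0" using assms unfolding cND_def by auto
    fix x1 x2 assume h: "x1 \<in> rec_cone A" "x2 \<in> rec_cone A" "x1 \<noteq> 0" "x2 \<noteq> 0"
      "sign_le x1 (c *\<^sub>R e)" "sign_le x2 (c *\<^sub>R e)" "c *\<^sub>R e = x1 + x2"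
    have "e = inverse c *\<^sub>R x1 + inverse c *\<^sub>R x2" using h(7) assms(1)
      by (metis scaleR_right_distrib scaleR_scaleR left_inverse less_irrefl scaleR_one)
    then obtain d where d: "d > 0" "inverse c *\<^sub>R x1 = d *\<^sub>R (inverse c *\<^sub>R x2)"
      using assms(2) h C(2) assms(1) unfolding cND_def
      by (metis inverse_positive_iff_positive less_irrefl scaleR_eq_0_iff sign_le_scale1 sign_le_scale2)
    then have "x1 = d *\<^sub>R x2" using assms(1)
      by (metis (no_types, lifting) inverse_nonzero_iff_nonzero less_irrefl scaleR_left_commute scaleR_left_imp_eq)
    then show "\<exists>d>0. x1 = d *\<^sub>R x2" using d by auto
  qed
qed

lemma sign_le_iff3: "sign_le y x \<longleftrightarrow> (\<forall>j. 0 \<le> sgn (x$j) * y$j \<and> (1 - \<bar>sgn (x$j)\<bar>) * y$j = 0)"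
  unfolding sign_le_iff by (simp add: sc3)

definition Sl :: "real^'r^'m \<Rightarrow> real^'m \<Rightarrow> real^'r \<Rightarrow> ((real^'r) \<times> real) set" where
"Sl A b x = {z. 0 \<le> snd z \<and> (\<forall>i. snd z * b$i \<le> (A *v fst z)$i) \<and> sign_le (fst z) x \<and> sg x \<bullet> fst z + snd z = 1}"

lemma Sl_closed: "closed (Sl A b x)"
proof -
  have "Sl A b x = {z. 0 \<le> snd z \<and> (\<forall>i. snd z * b$i \<le> (\<Sum>j\<in>UNIV. A$i$j * fst z $ j)) \<and>
      (\<forall>j. 0 \<le> sgn (x$j) * fst z$j \<and> (1 - \<bar>sgn (x$j)\<bar>) * fst z$j = 0) \<and>
      (\<Sum>j\<in>UNIV. sg x $ j * fst z $ j) + snd z = 1}"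
    unfolding Sl_def sign_le_iff3 matrix_vector_mult_def inner_vec_def by simp
  also have "closed \<dots>"
    by (intro closed_Collect_conj closed_Collect_all closed_Collect_le closed_Collect_eq continuous_intros)
  finally show ?thesis .
qed

lemma Sl_bounded: "bounded (Sl A b x)"
proof -
  have "Sl A b x \<subseteq> cball 0 1 \<times> cball 0 1"
  proof
    fix z assume z: "z \<in> Sl A b x"
    obtain y t where zz: "z = (y,t)" by (cases z)
    have s: "sign_le y x" "0 \<le> t" "sg x \<bullet> y + t = 1" using z zz unfolding Sl_def by auto
    have "norm y \<le> (\<Sum>j\<in>UNIV. \<bar>y$j\<bar>)" by (rule norm_le_l1_cart)
    also have "\<dots> = sg x \<bullet> y" using sg_inner s(1) by metis
    finally have "norm y \<le> 1" using s by linarith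
    moreover have "norm t \<le> 1" using s sg_inner_nonneg[OF s(1)] by auto
    ultimately show "z \<in> cball 0 1 \<times> cball 0 1" using zz by auto
  qed
  then show ?thesis by (rule bounded_subset[OF bounded_Times[OF bounded_cball bounded_cball]])
qed

lemma Sl_compact: "compact (Sl A b x)"
  using Sl_closed Sl_bounded compact_eq_bounded_closed by blast

lemma sign_le_iff2: "sign_le y x \<longleftrightarrow> (\<forall>j. (x$j = 0 \<longrightarrow> y$j = 0) \<and> (x$j > 0 \<longrightarrow> y$j \<ge> 0) \<and> (x$j < 0 \<longrightarrow> y$j \<le> 0))"
  unfolding sign_le_iff by (simp add: sc2)

lemma Sl_convex: "convex (Sl A b x)"
  unfolding convex_def
proof (intro ballI allI impI)
  fix z1 z2 and p q :: real
  assume h: "z1 \<in> Sl A b x" "z2 \<in> Sl A b x" "0 \<le> p" "0 \<le> q" "p + q = 1"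
  obtain y1 t1 y2 t2 where zz: "z1 = (y1,t1)" "z2 = (y2,t2)" by (cases z1, cases z2)
  have a: "0 \<le> t1" "\<forall>i. t1 * b$i \<le> (A *v y1)$i" "sign_le y1 x" "sg x \<bullet> y1 + t1 = 1"
    using h zz unfolding Sl_def by auto
  have c: "0 \<le> t2" "\<forall>i. t2 * b$i \<le> (A *v y2)$i" "sign_le y2 x" "sg x \<bullet> y2 + t2 = 1"
    using h zz unfolding Sl_def by auto
  have "\<forall>i. (p * t1 + q * t2) * b$i \<le> (A *v (p *\<^sub>R y1 + q *\<^sub>R y2))$i"
  proof
    fix i
    have "p * (t1 * b$i) \<le> p * (A *v y1)$i" "q * (t2 * b$i) \<le> q * (A *v y2)$i"
      using a(2) c(2) h(3,4) by (auto intro: mult_left_mono)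
    then show "(p * t1 + q * t2) * b$i \<le> (A *v (p *\<^sub>R y1 + q *\<^sub>R y2))$i"
      by (simp add: matrix_vector_right_distrib matrix_vector_mult_scaleR algebra_simps)
  qed
  moreover have "sign_le (p *\<^sub>R y1 + q *\<^sub>R y2) x"
    unfolding sign_le_iff2
  proof (intro allI conjI impI)
    fix j
    have y: "(x$j = 0 \<longrightarrow> y1$j = 0) \<and> (x$j > 0 \<longrightarrow> y1$j \<ge> 0) \<and> (x$j < 0 \<longrightarrow> y1$j \<le> 0)"
            "(x$j = 0 \<longrightarrow> y2$j = 0) \<and> (x$j > 0 \<longrightarrow> y2$j \<ge> 0) \<and> (x$j < 0 \<longrightarrow> y2$j \<le> 0)"
      using a(3) c(3) unfolding sign_le_iff2 by auto
    show "x$j = 0 \<Longrightarrow> (p *\<^sub>R y1 + q *\<^sub>R y2)$j = 0" using y by simp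
    show "x$j > 0 \<Longrightarrow> (p *\<^sub>R y1 + q *\<^sub>R y2)$j \<ge> 0" using y h(3,4) by simp
    show "x$j < 0 \<Longrightarrow> (p *\<^sub>R y1 + q *\<^sub>R y2)$j \<le> 0" using y h(3,4)
      by (simp add: add_nonpos_nonpos mult_nonneg_nonpos)
  qed
  moreover have "sg x \<bullet> (p *\<^sub>R y1 + q *\<^sub>R y2) + (p * t1 + q * t2) = 1"
  proof -
    have "sg x \<bullet> (p *\<^sub>R y1 + q *\<^sub>R y2) + (p * t1 + q * t2) = p * (sg x \<bullet> y1 + t1) + q * (sg x \<bullet> y2 + t2)"
      by (simp add: inner_add_right algebra_simps)
    then show ?thesis using a(4) c(4) h(5) by simp
  qed
  ultimately show "p *\<^sub>R z1 + q *\<^sub>R z2 \<in> Sl A b x"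
    using a(1) c(1) h(3,4) zz unfolding Sl_def by auto
qed

lemma Sl_mem: "(e,s) \<in> Sl A b x \<longleftrightarrow> 0 \<le> s \<and> (\<forall>i. s * b$i \<le> (A *v e)$i) \<and> sign_le e x \<and> sg x \<bullet> e + s = 1"
  unfolding Sl_def by simp

lemma lift_P:
  assumes "p \<in> polyhedron A b" "sign_le p x"
  shows "inverse (sg x \<bullet> p + 1) *\<^sub>R (p, 1::real) \<in> Sl A b x"
proof -
  define c where "c = sg x \<bullet> p + 1"
  have c: "c > 0" using sg_inner_nonneg[OF assms(2)] c_def by linarith
  have "\<forall>i. inverse c * b$i \<le> (A *v (inverse c *\<^sub>R p))$i"
    using assms(1) c unfolding polyhedron_def by (simp add: matrix_vector_mult_scaleR mult_left_mono)
  moreover have "sign_le (inverse c *\<^sub>R p) x" by (subst sign_le_scale1) (use c assms(2) in auto)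
  moreover have "sg x \<bullet> (inverse c *\<^sub>R p) + inverse c = 1"
    using c unfolding c_def by (simp add: field_simps)
  ultimately show ?thesis using c unfolding c_def[symmetric] by (simp add: Sl_mem)
qed

lemma lift_C:
  assumes "y \<in> rec_cone A" "sign_le y x" "y \<noteq> 0"
  shows "inverse (sg x \<bullet> y) *\<^sub>R (y, 0::real) \<in> Sl A b x"
proof -
  define c where "c = sg x \<bullet> y"
  have c: "c > 0" using sg_inner_pos[OF assms(2,3)] c_def by linarith
  have "\<forall>i. 0 * b$i \<le> (A *v (inverse c *\<^sub>R y))$i"
    using assms(1) c unfolding rec_cone_def by (simp add: matrix_vector_mult_scaleR)
  moreover have "sign_le (inverse c *\<^sub>R y) x" by (subst sign_le_scale1) (use c assms(2) in auto)
  moreover have "sg x \<bullet> (inverse c *\<^sub>R y) + 0 = 1"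
    using c unfolding c_def by (simp add: field_simps)
  ultimately show ?thesis using c unfolding c_def[symmetric] by (simp add: Sl_mem)
qed

lemma extreme_eq:
  assumes "z extreme_point_of S" "a \<in> S" "bb \<in> S" "0 < u" "u < 1" "z = (1 - u) *\<^sub>R a + u *\<^sub>R bb"
  shows "a = bb"
  using assms unfolding extreme_point_of_def in_segment by blast

lemma ext_ccND:
  assumes ext: "(e,s) extreme_point_of Sl A b x" and s: "s > 0"
  shows "ccND A b (inverse s *\<^sub>R e)"
proof -
  define p where "p = inverse s *\<^sub>R e"
  have es: "(e,s) \<in> Sl A b x" using ext extreme_point_of_def by blast
  then have es': "\<forall>i. s * b$i \<le> (A *v e)$i" "sign_le e x" "sg x \<bullet> e + s = 1" by (auto simp: Sl_mem)
  have pP: "p \<in> polyhedron A b" unfolding polyhedron_def p_def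
  proof (intro CollectI allI)
    fix i
    have "b$i \<le> (A*v e)$i / s" using es'(1) s by (simp add: pos_le_divide_eq mult.commute)
    then show "b $ i \<le> (A *v (inverse s *\<^sub>R e)) $ i" using s by (simp add: matrix_vector_mult_scaleR divide_inverse mult.commute)
  qed
  have px: "sign_le p x" unfolding p_def by (subst sign_le_scale1) (use s es'(2) in auto)
  have e_eq: "e = s *\<^sub>R p" unfolding p_def using s by simp
  show ?thesis unfolding ccND_def p_def[symmetric]
  proof (intro conjI pP allI impI)
    fix p1 p2 t
    assume h: "p1 \<in> polyhedron A b" "p2 \<in> polyhedron A b" "sign_le p1 p" "sign_le p2 p" "0 < t" "t < 1"
      "p = t *\<^sub>R p1 + (1 - t) *\<^sub>R p2"
    have x1: "sign_le p1 x" "sign_le p2 x" using h(3,4) px sign_le_trans by blast+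
    define c1 where "c1 = sg x \<bullet> p1 + 1"
    define c2 where "c2 = sg x \<bullet> p2 + 1"
    have c: "c1 > 0" "c2 > 0" using sg_inner_nonneg[OF x1(1)] sg_inner_nonneg[OF x1(2)] c1_def c2_def by linarith+
    define a where "a = inverse c1 *\<^sub>R (p1, 1::real)"
    define bb where "bb = inverse c2 *\<^sub>R (p2, 1::real)"
    have ab: "a \<in> Sl A b x" "bb \<in> Sl A b x" unfolding a_def bb_def c1_def c2_def
      using lift_P h(1,2) x1 by blast+
    define \<beta> where "\<beta> = s * (1 - t) * c2"
    have sum1: "s * t * c1 + \<beta> = 1"
    proof -
      have "s * t * c1 + \<beta> = s * (sg x \<bullet> (t *\<^sub>R p1 + (1 - t) *\<^sub>R p2) + 1)"
        unfolding \<beta>_def c1_def c2_def by (simp add: inner_add_right algebra_simps)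
      also have "\<dots> = sg x \<bullet> e + s" unfolding e_eq h(7) by (simp add: inner_add_right algebra_simps)
      finally show ?thesis using es'(3) by simp
    qed
    have p1: "0 < s * t * c1" using s h(5) c(1) by simp
    have p2: "0 < \<beta>" unfolding \<beta>_def using s h(6) c(2) by simp
    have bpos: "0 < \<beta>" "\<beta> < 1" using p1 p2 sum1 by linarith+
    have "(e, s) = (1 - \<beta>) *\<^sub>R a + \<beta> *\<^sub>R bb"
    proof -
      have "1 - \<beta> = s * t * c1" using sum1 by simp
      then have "(1 - \<beta>) *\<^sub>R a = (s * t) *\<^sub>R (p1, 1)" unfolding a_def using c by simp
      moreover have "\<beta> *\<^sub>R bb = (s * (1 - t)) *\<^sub>R (p2, 1)" unfolding bb_def \<beta>_def using c by simp
      ultimately have "(1 - \<beta>) *\<^sub>R a + \<beta> *\<^sub>R bb = (s * t) *\<^sub>R (p1, 1) + (s * (1 - t)) *\<^sub>R (p2, 1)"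
        by (simp only:)
      also have "\<dots> = (e, s)" unfolding e_eq h(7) by (simp add: algebra_simps)
      finally show ?thesis by simp
    qed
    then have "a = bb" using extreme_eq[OF ext ab bpos] by simp
    then have f: "snd a = snd bb" "fst a = fst bb" by simp_all
    have cc: "c1 = c2" using f(1) unfolding a_def bb_def by simp
    have "inverse c1 *\<^sub>R p1 = inverse c1 *\<^sub>R p2" using f(2) unfolding a_def bb_def cc by simp
    then have "c1 = c2" "inverse c1 *\<^sub>R p1 = inverse c1 *\<^sub>R p2" using cc by simp_all
    then show "p1 = p2" using c by simp
  qed
qed

lemma ext_cND:
  assumes ext: "(e,0) extreme_point_of Sl A b x"
  shows "cND A e"
proof -
  have es: "(e,0) \<in> Sl A b x" using ext extreme_point_of_def by blast
  then have es': "\<forall>i. 0 \<le> (A *v e)$i" "sign_le e x" "sg x \<bullet> e = 1" by (auto simp: Sl_mem)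
  have eC: "e \<in> rec_cone A" using es'(1) unfolding rec_cone_def by simp
  have e0: "e \<noteq> 0" using es'(3) by auto
  show ?thesis unfolding cND_def
  proof (intro conjI eC e0 allI impI)
    fix x1 x2
    assume h: "x1 \<in> rec_cone A" "x2 \<in> rec_cone A" "x1 \<noteq> 0" "x2 \<noteq> 0" "sign_le x1 e" "sign_le x2 e" "e = x1 + x2"
    have x1: "sign_le x1 x" "sign_le x2 x" using h(5,6) es'(2) sign_le_trans by blast+
    define c1 where "c1 = sg x \<bullet> x1"
    define c2 where "c2 = sg x \<bullet> x2"
    have c: "c1 > 0" "c2 > 0" using sg_inner_pos[OF x1(1) h(3)] sg_inner_pos[OF x1(2) h(4)] c1_def c2_def by auto
    define a where "a = inverse c1 *\<^sub>R (x1, 0::real)"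
    define bb where "bb = inverse c2 *\<^sub>R (x2, 0::real)"
    have ab: "a \<in> Sl A b x" "bb \<in> Sl A b x" unfolding a_def bb_def c1_def c2_def
      using lift_C h x1 by blast+
    have sum1: "c1 + c2 = 1" using es'(3) h(7) unfolding c1_def c2_def by (simp add: inner_add_right)
    have bpos: "0 < c2" "c2 < 1" using c sum1 by auto
    have "(e, 0) = (1 - c2) *\<^sub>R a + c2 *\<^sub>R bb"
    proof -
      have "1 - c2 = c1" using sum1 by simp
      then have "(1 - c2) *\<^sub>R a = (x1, 0)" unfolding a_def using c by simp
      moreover have "c2 *\<^sub>R bb = (x2, 0)" unfolding bb_def using c by simp
      ultimately show ?thesis using h(7) by simp
    qed
    then have "a = bb" using extreme_eq[OF ext ab bpos] by simp
    then have "inverse c1 *\<^sub>R x1 = inverse c2 *\<^sub>R x2" unfolding a_def bb_def by simp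
    then have "c1 *\<^sub>R (inverse c1 *\<^sub>R x1) = c1 *\<^sub>R (inverse c2 *\<^sub>R x2)" by simp
    then have "x1 = (c1 / c2) *\<^sub>R x2" using c by (simp add: divide_inverse)
    then show "\<exists>d>0. x1 = d *\<^sub>R x2" using c by (intro exI[of _ "c1/c2"]) auto
  qed
qed

lemma Sl_P: "(e,s) \<in> Sl A b x \<Longrightarrow> s > 0 \<Longrightarrow> inverse s *\<^sub>R e \<in> polyhedron A b"
  unfolding polyhedron_def
proof (intro CollectI allI)
  fix i assume es: "(e,s) \<in> Sl A b x" and s: "s > 0"
  have "s * b$i \<le> (A *v e)$i" using es by (simp add: Sl_mem)
  then have "b$i \<le> (A*v e)$i / s" using s by (simp add: pos_le_divide_eq mult.commute)
  then show "b $ i \<le> (A *v (inverse s *\<^sub>R e)) $ i" using s by (simp add: matrix_vector_mult_scaleR divide_inverse mult.commute)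
qed

lemma Sl_C: "(e,0) \<in> Sl A b x \<Longrightarrow> e \<in> rec_cone A"
  unfolding rec_cone_def by (simp add: Sl_mem)

lemma Sl_hyp: "z \<in> Sl A b x \<Longrightarrow> (sg x, 1) \<bullet> z = 1"
  by (cases z) (simp add: Sl_mem)

lemma card_bound:
  assumes "finite T" "T \<subseteq> Sl A b x" "int (card T) \<le> aff_dim T + 1"
  shows "card T \<le> dim (insert 0 T)"
proof -
  have "T \<subseteq> {z. (sg x, 1) \<bullet> z = 1}"
  proof
    fix z assume "z \<in> T" then show "z \<in> {z. (sg x, 1) \<bullet> z = 1}" using assms(2) Sl_hyp[of z A b x] by auto
  qed
  then have "affine hull T \<subseteq> {z. (sg x, 1) \<bullet> z = 1}"
    by (rule hull_minimal) (rule affine_hyperplane)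
  then have "0 \<notin> affine hull T" by auto
  then have "aff_dim (insert 0 T) = aff_dim T + 1" by (simp add: aff_dim_insert)
  moreover have "aff_dim (insert 0 T) = int (dim (insert 0 T))"
    by (rule aff_dim_zero) (simp add: hull_inc)
  ultimately show ?thesis using assms(3) by linarith
qed

lemma dim_bound_supp:
  assumes "T \<subseteq> Sl A b x"
  shows "dim (insert 0 T) \<le> card (supp x) + 1"
proof -
  define B where "B = insert (0, 1::real) ((\<lambda>j. (axis j (1::real), 0::real)) ` supp x)"
  have fin: "finite B" unfolding B_def by simp
  have "card B \<le> card ((\<lambda>j. (axis j (1::real), 0::real)) ` supp x) + 1"
    unfolding B_def by (simp add: card_insert_le_m1 card_insert_if)
  also have "\<dots> \<le> card (supp x) + 1" by (simp add: card_image_le)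
  finally have cB: "card B \<le> card (supp x) + 1" .
  have "insert 0 T \<subseteq> span B"
  proof
    fix z assume "z \<in> insert 0 T"
    then consider "z = 0" | "z \<in> T" by auto
    then show "z \<in> span B"
    proof cases
      case 1 then show ?thesis by (simp add: span_zero)
    next
      case 2
      obtain e s where zz: "z = (e,s)" by (cases z)
      have sl: "sign_le e x" using 2 assms zz by (auto simp: Sl_mem)
      have "e = (\<Sum>j\<in>UNIV. e$j *\<^sub>R axis j 1)"
        using basis_expansion[of e] by (simp add: scalar_mult_eq_scaleR)
      also have "\<dots> = (\<Sum>j\<in>supp x. e$j *\<^sub>R axis j 1)"
      proof (rule sum.mono_neutral_right)
        show "\<forall>i\<in>UNIV - supp x. e $ i *\<^sub>R axis i 1 = 0"
        proof
          fix i assume "i \<in> UNIV - supp x" then have "x$i = 0" by (simp add: supp_def)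
          then have "e$i = 0" using sl[unfolded sign_le_def, rule_format, of i] by (auto simp: sgn_0_0)
          then show "e $ i *\<^sub>R axis i 1 = 0" by simp
        qed
      qed auto
      finally have ee: "e = (\<Sum>j\<in>supp x. e$j *\<^sub>R axis j 1)" .
      have "(e, 0) = (\<Sum>j\<in>supp x. e$j *\<^sub>R (axis j (1::real), 0::real))"
        by (rule prod_eqI) (simp_all add: fst_sum snd_sum ee[symmetric])
      also have "\<dots> \<in> span B"
        by (intro span_sum span_mul span_base) (auto simp: B_def)
      finally have e0: "(e,0) \<in> span B" .
      have "(0, 1) \<in> span B" by (rule span_base) (simp add: B_def)
      then have "(e,0) + s *\<^sub>R (0,1) \<in> span B" using e0 by (intro span_add span_mul)
      then show ?thesis using zz by simp
    qed
  qed
  then have "dim (insert 0 T) \<le> card B" using dim_le_card fin by blast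
  then show ?thesis using cB by linarith
qed

lemma dim_bound_P:
  assumes xP: "x \<in> polyhedron A b" and T: "T \<subseteq> Sl A b x"
  shows "int (dim (insert 0 T)) \<le> aff_dim (polyhedron A b) + 1"
proof -
  define L where "L = (\<lambda>p. (p, 1::real)) ` polyhedron A b"
  have "insert 0 T \<subseteq> span L"
  proof
    fix z assume "z \<in> insert 0 T"
    then consider "z = 0" | "z \<in> T" by auto
    then show "z \<in> span L"
    proof cases
      case 1 then show ?thesis by (simp add: span_zero)
    next
      case 2
      obtain e s where zz: "z = (e,s)" by (cases z)
      have es: "(e,s) \<in> Sl A b x" using 2 T zz by auto
      then have s0: "s \<ge> 0" by (simp add: Sl_mem)
      show ?thesis
      proof (cases "s = 0")
        case True
        have eC: "e \<in> rec_cone A" using es True Sl_C by blast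
        have "x + e \<in> polyhedron A b" using xP eC
          unfolding polyhedron_def rec_cone_def by (auto simp: matrix_vector_right_distrib add_increasing2)
        then have "(x + e, 1) - (x, 1) \<in> span L"
          by (intro span_diff span_base) (use xP in \<open>auto simp: L_def\<close>)
        then show ?thesis using zz True by simp
      next
        case False
        then have s: "s > 0" using s0 by simp
        have "inverse s *\<^sub>R e \<in> polyhedron A b" using Sl_P es s by blast
        then have "s *\<^sub>R (inverse s *\<^sub>R e, 1) \<in> span L"
          by (intro span_mul span_base) (auto simp: L_def)
        then show ?thesis using zz s by simp
      qed
    qed
  qed
  then have "dim (insert 0 T) \<le> dim (span L)" by (rule dim_subset)
  also have "\<dots> = dim L" by simp
  also have "\<dots> \<le> dim (insert 0 L)" by (rule dim_subset) auto
  finally have d1: "dim (insert 0 T) \<le> dim (insert 0 L)" .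
  have "affine hull L \<subseteq> {z. (0, 1::real) \<bullet> z = 1}"
    by (rule hull_minimal) (auto simp: L_def affine_hyperplane)
  then have "0 \<notin> affine hull L" by auto
  then have "aff_dim (insert 0 L) = aff_dim L + 1" by (simp add: aff_dim_insert)
  moreover have "aff_dim (insert 0 L) = int (dim (insert 0 L))"
    by (rule aff_dim_zero) (simp add: hull_inc)
  moreover have "aff_dim L = aff_dim (polyhedron A b)"
  proof -
    have lin: "linear (\<lambda>p::real^'r. (p, 0::real))" by (rule linearI) auto
    have inj: "inj (\<lambda>p::real^'r. (p, 0::real))" by (auto intro: injI)
    have "L = (+) (0, 1) ` ((\<lambda>p. (p, 0::real)) ` polyhedron A b)"
      unfolding L_def image_image by simp
    then show ?thesis using aff_dim_translation_eq aff_dim_injective_linear_image[OF lin inj] by metis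
  qed
  ultimately show ?thesis using d1 by linarith
qed

lemma min_rep:
  fixes F :: "'a::euclidean_space set"
  assumes "y0 \<in> convex hull F"
  shows "\<exists>T u. finite T \<and> T \<subseteq> F \<and> (\<forall>z\<in>T. 0 < u z) \<and> sum u T = 1 \<and>
           (\<Sum>z\<in>T. u z *\<^sub>R z) = y0 \<and> int (card T) \<le> aff_dim T + 1"
proof -
  define Q where "Q n \<longleftrightarrow> (\<exists>T u. finite T \<and> card T = n \<and> T \<subseteq> F \<and> (\<forall>z\<in>T. 0 \<le> u z) \<and>
      sum u T = 1 \<and> (\<Sum>z\<in>T. u z *\<^sub>R z) = y0)" for n
  have "\<exists>n. Q n" using assms unfolding convex_hull_explicit Q_def by blast
  then obtain n where n: "Q n" "\<forall>m<n. \<not> Q m" using exists_least_iff[of Q] by blast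
  then obtain T u where T: "finite T" "card T = n" "T \<subseteq> F" "\<forall>z\<in>T. 0 \<le> u z" "sum u T = 1"
    "(\<Sum>z\<in>T. u z *\<^sub>R z) = y0" unfolding Q_def by blast
  have pos: "\<forall>z\<in>T. 0 < u z"
  proof (rule ccontr)
    assume "\<not> (\<forall>z\<in>T. 0 < u z)"
    then obtain z where z: "z \<in> T" "u z = 0" using T(4) by force
    have "sum u (T - {z}) = 1" using sum.remove[OF T(1) z(1), of u] T(5) z(2) by simp
    moreover have "(\<Sum>z\<in>T - {z}. u z *\<^sub>R z) = y0"
      using sum.remove[OF T(1) z(1), of "\<lambda>z. u z *\<^sub>R z"] T(6) z(2) by simp
    moreover have "card (T - {z}) < n"
    proof -
      have "card T > 0" using T(1) z(1) card_gt_0_iff by blast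
      then show ?thesis using T(1,2) z(1) by simp
    qed
    ultimately have "Q (card (T - {z}))" unfolding Q_def using T
      by (intro exI[of _ "T - {z}"] exI[of _ u]) auto
    then show False using n(2) \<open>card (T - {z}) < n\<close> by blast
  qed
  have "y0 \<in> convex hull T" unfolding convex_hull_finite[OF T(1)] using T by blast
  then obtain S w where S: "finite S" "S \<subseteq> T" "int (card S) \<le> aff_dim T + 1" "\<forall>z\<in>S. 0 \<le> w z"
    "sum w S = 1" "(\<Sum>z\<in>S. w z *\<^sub>R z) = y0"
    unfolding convex_hull_caratheodory_aff_dim[of T] by blast
  have "Q (card S)" unfolding Q_def using S T(3) by (intro exI[of _ S] exI[of _ w]) auto
  then have "n \<le> card S" using n(2) not_less by blast
  then have "int (card T) \<le> aff_dim T + 1" using S(3) T(2) by linarith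
  then show ?thesis using T pos by blast
qed

theorem theorem3:
  fixes A :: "real^'r^'m" and b :: "real^'m" and x :: "real^'r"
  assumes "x \<in> polyhedron A b"
  shows "\<exists>E0 E1 (l :: real^'r \<Rightarrow> real).
           finite E0 \<and> finite E1 \<and>
           (\<forall>e\<in>E0. cND A e) \<and> (\<forall>e\<in>E1. ccND A b e) \<and>
           x = (\<Sum>e\<in>E0. e) + (\<Sum>e\<in>E1. l e *\<^sub>R e) \<and>
           (\<forall>e\<in>E0 \<union> E1. sign_le e x) \<and>
           (\<forall>e\<in>E1. l e \<ge> 0) \<and> (\<Sum>e\<in>E1. l e) = 1 \<and>
           int (card (E0 \<union> E1)) \<le> aff_dim (polyhedron A b) + 1 \<and>
           card (E0 \<union> E1) \<le> card (supp x) + card (supp (A *v x)) + 1"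
proof -
  define F where "F = {z. z extreme_point_of Sl A b x}"
  define c0 where "c0 = sg x \<bullet> x + 1"
  have c0: "c0 > 0" using sg_inner_nonneg[OF sign_le_refl[of x]] c0_def by linarith
  define y0 where "y0 = inverse c0 *\<^sub>R (x, 1::real)"
  have "y0 \<in> Sl A b x" unfolding y0_def c0_def by (rule lift_P[OF assms sign_le_refl])
  moreover have KM: "Sl A b x = convex hull F" unfolding F_def
    by (rule Krein_Milman_Minkowski[OF Sl_compact Sl_convex])
  ultimately have y0F: "y0 \<in> convex hull F" by (simp only:)
  then obtain T u where T: "finite T" "T \<subseteq> F" "\<forall>z\<in>T. 0 < u z" "sum u T = 1"
    "(\<Sum>z\<in>T. u z *\<^sub>R z) = y0" "int (card T) \<le> aff_dim T + 1"
    using min_rep[OF y0F] by blast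
  have TS: "T \<subseteq> Sl A b x" using T(2) unfolding F_def extreme_point_of_def by auto
  have cT: "card T \<le> dim (insert 0 T)" by (rule card_bound[OF T(1) TS T(6)])
  have b1: "card T \<le> card (supp x) + 1" using cT dim_bound_supp[OF TS] by linarith
  have b2: "int (card T) \<le> aff_dim (polyhedron A b) + 1" using cT dim_bound_P[OF assms TS] by linarith
  have xsum: "(x, 1) = (\<Sum>z\<in>T. (c0 * u z) *\<^sub>R z)"
  proof -
    have "(x, 1) = c0 *\<^sub>R y0" unfolding y0_def using c0 by simp
    also have "\<dots> = (\<Sum>z\<in>T. (c0 * u z) *\<^sub>R z)" unfolding T(5)[symmetric] scaleR_sum_right by simp
    finally show ?thesis .
  qed
  have zS: "\<And>z. z \<in> T \<Longrightarrow> 0 \<le> snd z \<and> sign_le (fst z) x \<and> z extreme_point_of Sl A b x"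
    using TS T(2) unfolding F_def by (auto simp: Sl_def)
  define T0 where "T0 = T \<inter> {z. snd z = 0}"
  define T1 where "T1 = T - {z. snd z = 0}"
  have fin: "finite T0" "finite T1" using T(1) T0_def T1_def by auto
  have T1pos: "\<And>z. z \<in> T1 \<Longrightarrow> snd z > 0" using zS unfolding T1_def by force
  define g0 where "g0 z = (c0 * u z) *\<^sub>R fst z" for z
  define g1 where "g1 z = inverse (snd z) *\<^sub>R fst z" for z :: "(real^'r) \<times> real"
  have hyp: "\<And>z. z \<in> T \<Longrightarrow> sg x \<bullet> fst z + snd z = 1"
    using TS by (auto simp: Sl_def)
  have inj0: "inj_on g0 T0"
  proof (rule inj_onI)
    fix z z' assume h: "z \<in> T0" "z' \<in> T0" "g0 z = g0 z'"
    have s: "snd z = 0" "snd z' = 0" using h T0_def by auto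
    have zT: "z \<in> T" "z' \<in> T" using h T0_def by auto
    have "sg x \<bullet> g0 z = c0 * u z" unfolding g0_def using hyp[OF zT(1)] s(1) by simp
    moreover have "sg x \<bullet> g0 z' = c0 * u z'" unfolding g0_def using hyp[OF zT(2)] s(2) by simp
    ultimately have "c0 * u z = c0 * u z'" using h(3) by auto
    then have "u z = u z'" using c0 by simp
    then have "fst z = fst z'" using h(3) T(3) c0 h(1,2) T0_def unfolding g0_def by auto
    then show "z = z'" using s by (simp add: prod_eq_iff)
  qed
  have inj1: "inj_on g1 T1"
  proof (rule inj_onI)
    fix z z' assume h: "z \<in> T1" "z' \<in> T1" "g1 z = g1 z'"
    have s: "snd z > 0" "snd z' > 0" using h T1pos by auto
    have f: "fst z = snd z *\<^sub>R g1 z" "fst z' = snd z' *\<^sub>R g1 z'" using s unfolding g1_def by auto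
    have zT: "z \<in> T" "z' \<in> T" using h T1_def by auto
    have e1: "snd z * (sg x \<bullet> g1 z + 1) = 1"
    proof -
      have "sg x \<bullet> fst z + snd z = 1" using hyp zT by blast
      then show ?thesis unfolding f(1) by (simp add: algebra_simps)
    qed
    have e2: "snd z' * (sg x \<bullet> g1 z + 1) = 1"
    proof -
      have "sg x \<bullet> fst z' + snd z' = 1" using hyp zT by blast
      then show ?thesis unfolding f(2) h(3) by (simp add: algebra_simps)
    qed
    have k: "sg x \<bullet> g1 z + 1 \<noteq> 0" using e1 by auto
    have "snd z * (sg x \<bullet> g1 z + 1) = snd z' * (sg x \<bullet> g1 z + 1)" using e1 e2 by simp
    then have "snd z = snd z'" using k by simp
    then show "z = z'" using f h(3) by (simp add: prod_eq_iff)
  qed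
  define E0 where "E0 = g0 ` T0"
  define E1 where "E1 = g1 ` T1"
  define l where "l p = (let z = the_inv_into T1 g1 p in c0 * u z * snd z)" for p
  have lg: "\<And>z. z \<in> T1 \<Longrightarrow> l (g1 z) = c0 * u z * snd z"
    unfolding l_def using the_inv_into_f_f[OF inj1] by simp
  have split: "\<And>f. sum f T = sum f T0 + sum f T1"
    unfolding T0_def T1_def by (rule sum.Int_Diff[OF T(1)])
  have xeq: "x = (\<Sum>z\<in>T. (c0 * u z) *\<^sub>R fst z)"
    using arg_cong[OF xsum, of fst] by (simp add: fst_sum)
  have oneeq: "1 = (\<Sum>z\<in>T. (c0 * u z) * snd z)"
    using arg_cong[OF xsum, of snd] by (simp add: snd_sum)
  have S0: "(\<Sum>e\<in>E0. e) = (\<Sum>z\<in>T0. (c0 * u z) *\<^sub>R fst z)"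
    unfolding E0_def sum.reindex[OF inj0] g0_def by simp
  have S1: "(\<Sum>e\<in>E1. l e *\<^sub>R e) = (\<Sum>z\<in>T1. (c0 * u z) *\<^sub>R fst z)"
    unfolding E1_def sum.reindex[OF inj1] o_def
  proof (rule sum.cong[OF refl])
    fix z assume z: "z \<in> T1"
    have "l (g1 z) *\<^sub>R g1 z = (c0 * u z * snd z * inverse (snd z)) *\<^sub>R fst z"
      unfolding lg[OF z] by (simp add: g1_def)
    also have "\<dots> = (c0 * u z) *\<^sub>R fst z" using T1pos[OF z] by simp
    finally show "l (g1 z) *\<^sub>R g1 z = (c0 * u z) *\<^sub>R fst z" .
  qed
  have L1: "(\<Sum>e\<in>E1. l e) = 1"
  proof -
    have "(\<Sum>e\<in>E1. l e) = (\<Sum>z\<in>T1. c0 * u z * snd z)"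
      unfolding E1_def sum.reindex[OF inj1] o_def using lg by simp
    moreover have "(\<Sum>z\<in>T0. (c0 * u z) * snd z) = 0" unfolding T0_def by simp
    ultimately show ?thesis using oneeq split[of "\<lambda>z. (c0 * u z) * snd z"] by simp
  qed
  have X: "x = (\<Sum>e\<in>E0. e) + (\<Sum>e\<in>E1. l e *\<^sub>R e)"
    unfolding S0 S1 using xeq split by simp
  have cnd: "\<forall>e\<in>E0. cND A e"
  proof
    fix e assume "e \<in> E0"
    then obtain z where z: "z \<in> T0" "e = g0 z" unfolding E0_def by blast
    have "z = (fst z, 0)" using z T0_def by (simp add: prod_eq_iff)
    moreover have "z extreme_point_of Sl A b x" using zS[of z] z T0_def by simp
    ultimately have "cND A (fst z)" using ext_cND by metis
    moreover have "c0 * u z > 0" using c0 T(3) z T0_def by simp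
    ultimately show "cND A e" using z cND_scale unfolding g0_def by blast
  qed
  have ccnd: "\<forall>e\<in>E1. ccND A b e"
  proof
    fix e assume "e \<in> E1"
    then obtain z where z: "z \<in> T1" "e = g1 z" unfolding E1_def by blast
    have "(fst z, snd z) extreme_point_of Sl A b x" using zS[of z] z T1_def by simp
    then show "ccND A b e" using ext_ccND T1pos[OF z(1)] z(2) unfolding g1_def by blast
  qed
  have sgn: "\<forall>e\<in>E0 \<union> E1. sign_le e x"
  proof
    fix e assume "e \<in> E0 \<union> E1"
    then consider z where "z \<in> T0" "e = g0 z" | z where "z \<in> T1" "e = g1 z"
      unfolding E0_def E1_def by blast
    then show "sign_le e x"
    proof cases
      case 1
      have p: "c0 * u z > 0" using c0 T(3) 1 T0_def by simp
      have "sign_le (fst z) x" using zS[of z] 1 T0_def by auto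
      then show ?thesis unfolding 1(2) g0_def using sign_le_scale1[OF p] by blast
    next
      case 2
      have p: "inverse (snd z) > 0" using T1pos 2 by simp
      have "sign_le (fst z) x" using zS[of z] 2 T1_def by auto
      then show ?thesis unfolding 2(2) g1_def using sign_le_scale1[OF p] by blast
    qed
  qed
  have lpos: "\<forall>e\<in>E1. l e \<ge> 0"
  proof
    fix e assume "e \<in> E1"
    then obtain z where z: "z \<in> T1" "e = g1 z" unfolding E1_def by blast
    show "l e \<ge> 0" unfolding z(2) lg[OF z(1)] using c0 T(3) T1pos[OF z(1)] z(1) T1_def
      by (simp add: less_imp_le)
  qed
  have cE: "card (E0 \<union> E1) \<le> card T"
  proof -
    have "card (E0 \<union> E1) \<le> card E0 + card E1" by (rule card_Un_le)
    also have "\<dots> \<le> card T0 + card T1" unfolding E0_def E1_def by (intro add_mono card_image_le fin)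
    also have "\<dots> = card T" unfolding T0_def T1_def using card_Int_Diff[OF T(1)] by simp
    finally show ?thesis .
  qed
  have finE: "finite E0" "finite E1" unfolding E0_def E1_def using fin by auto
  show ?thesis
    apply (rule exI[of _ E0], rule exI[of _ E1], rule exI[of _ l])
    apply (intro conjI)
    using finE cnd ccnd X sgn lpos L1 cE b1 b2 unfolding E0_def[symmetric] E1_def[symmetric] by auto
qed

end
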